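(* Let $(C,\mathfrak p,\mathfrak d)$ be a regular $q$-cycle coalgebra with $\mathfrak p_{11}^1\ne0$. Then $\mathfrak d_{b1}^c=\mathfrak p_{b1}^c$ for all $b,c\in\{0,\dots,n-1\}$.
   Context: $K$ is an algebraically closed field of characteristic $0$ and $n\ge2$. $C$ is the coalgebra dual to $K[y]/\langle y^n\rangle$: basis $x_0,\dots,x_{n-1}$, $\Delta(x_i)=\sum_{j+k=i}x_j\otimes x_k$, $\epsilon(x_i)=\delta_{i0}$; $C\otimes C$ has the tensor product coalgebra structure; Sweedler notation $\Delta(b)=b_{(1)}\otimes b_{(2)}$. For linear maps $\mathfrak p,\mathfrak d\colon C\otimes C\to C$ write $a\cdot b=\mathfrak p(a\otimes b)$, $a:b=\mathfrak d(a\otimes b)$, $\mathfrak p(x_i\otimes x_j)=\sum_{k=0}^{n-1}\mathfrak p_{ij}^kx_k$, $\mathfrak d(x_i\otimes x_j)=\sum_{k=0}^{n-1}\mathfrak d_{ij}^kx_k$. A triple $(C,\mathfrak p,\mathfrak d)$ with $\mathfrak p,\mathfrak d$ coalgebra morphisms is a regular $q$-magma coalgebra if there are coalgebra morphisms $a\otimes b\mapsto a^b$, $a\otimes b\mapsto a_b$ from $C\otimes C$ to $C$ with $a^{b_{(1)}}\cdot b_{(2)}=(a\cdot b_{(1)})^{b_{(2)}}=\epsilon(b)a$ and $(a:b_{(2)})_{b_{(1)}}=a_{b_{(2)}}:b_{(1)}=\epsilon(b)a$. It is a regular $q$-cycle coalgebra if moreover for all $a,b,c$: (1) $(a\cdot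 b_{(1)})\cdot(c:b_{(2)})=(a\cdot c_{(2)})\cdot(b\cdot c_{(1)})$; (2) $(a\cdot b_{(1)}):(c\cdot b_{(2)})=(a:c_{(2)})\cdot(b:c_{(1)})$; (3) $(a:b_{(1)}):(c:b_{(2)})=(a:c_{(2)}):(b\cdot c_{(1)})$. *)

theory Defs
  imports "HOL-Computational_Algebra.Polynomial"
begin

definition alg_closed :: "'a::field itself \<Rightarrow> bool" where
  "alg_closed _ \<longleftrightarrow> (\<forall>q::'a poly. degree q > 0 \<longrightarrow> (\<exists>x. poly q x = 0))"

text \<open>C has basis x_0,...,x_{n-1}.  A linear map f : C \<otimes> C \<rightarrow> C is given by its
 structure constants: f(x_i \<otimes> x_j) = sum_{k<n} f i j k x_k.
 Delta(x_i) = sum_{s+t=i} x_s \<otimes> x_t, eps(x_i) = delta_{i0};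
 C \<otimes> C carries the tensor product coalgebra structure.\<close>

text \<open>f is a coalgebra morphism C \<otimes> C \<rightarrow> C:
 Delta(f(x_i \<otimes> x_j)) = (f \<otimes> f)(Delta(x_i \<otimes> x_j)) (compared coefficientwise at x_u \<otimes> x_v)
 and eps(f(x_i \<otimes> x_j)) = eps(x_i) eps(x_j).\<close>
definition coalg_mor :: "nat \<Rightarrow> (nat \<Rightarrow> nat \<Rightarrow> nat \<Rightarrow> 'a::field) \<Rightarrow> bool" where
  "coalg_mor n f \<longleftrightarrow>
     (\<forall>i<n. \<forall>j<n.
        (\<forall>u<n. \<forall>v<n.
           (if u + v < n then f i j (u + v) else 0) =
           (\<Sum>a\<le>i. \<Sum>c\<le>j. f a c u * f (i - a) (j - c) v))
      \<and> f i j 0 = (if i = 0 \<and> j = 0 then 1 else 0))"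

text \<open>Regular q-magma coalgebra: there exist coalgebra morphisms L (a \<otimes> b \<mapsto> a^b) and
 R (a \<otimes> b \<mapsto> a_b) with
   a^{b(1)} \<cdot> b(2) = (a \<cdot> b(1))^{b(2)} = eps(b) a,
   (a : b(2))_{b(1)} = a_{b(2)} : b(1) = eps(b) a,
 written out on basis elements a = x_i, b = x_j, coefficient of x_k.\<close>
definition regular_q_magma :: "nat \<Rightarrow> (nat \<Rightarrow> nat \<Rightarrow> nat \<Rightarrow> 'a::field) \<Rightarrow>
    (nat \<Rightarrow> nat \<Rightarrow> nat \<Rightarrow> 'a) \<Rightarrow> bool" where
  "regular_q_magma n p d \<longleftrightarrow> coalg_mor n p \<and> coalg_mor n d \<and>
    (\<exists>L R. coalg_mor n L \<and> coalg_mor n R \<and>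
      (\<forall>i<n. \<forall>j<n. \<forall>k<n.
        (\<Sum>s\<le>j. \<Sum>m<n. L i s m * p m (j - s) k) = (if j = 0 \<and> i = k then 1 else 0)
      \<and> (\<Sum>s\<le>j. \<Sum>m<n. p i s m * L m (j - s) k) = (if j = 0 \<and> i = k then 1 else 0)
      \<and> (\<Sum>s\<le>j. \<Sum>m<n. d i (j - s) m * R m s k) = (if j = 0 \<and> i = k then 1 else 0)
      \<and> (\<Sum>s\<le>j. \<Sum>m<n. R i (j - s) m * d m s k) = (if j = 0 \<and> i = k then 1 else 0)))"

text \<open>Regular q-cycle coalgebra: additionally identities (1)-(3), for a = x_i, b = x_j, c = x_l,
 coefficient of x_k (by multilinearity this is equivalent to all a, b, c).\<close>
definition regular_q_cycle :: "nat \<Rightarrow> (nat \<Rightarrow> nat \<Rightarrow> nat \<Rightarrow> 'a::field) \<Rightarrow>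
    (nat \<Rightarrow> nat \<Rightarrow> nat \<Rightarrow> 'a) \<Rightarrow> bool" where
  "regular_q_cycle n p d \<longleftrightarrow> regular_q_magma n p d \<and>
    (\<forall>i<n. \<forall>j<n. \<forall>l<n. \<forall>k<n.
      \<comment> \<open>(1) (a\<cdot>b(1))\<cdot>(c:b(2)) = (a\<cdot>c(2))\<cdot>(b\<cdot>c(1))\<close>
      (\<Sum>s\<le>j. \<Sum>m<n. \<Sum>r<n. p i s m * d l (j - s) r * p m r k) =
      (\<Sum>s\<le>l. \<Sum>m<n. \<Sum>r<n. p i (l - s) m * p j s r * p m r k)
    \<and> \<comment> \<open>(2) (a\<cdot>b(1)):(c\<cdot>b(2)) = (a:c(2))\<cdot>(b:c(1))\<close>
      (\<Sum>s\<le>j. \<Sum>m<n. \<Sum>r<n. p i s m * p l (j - s) r * d m r k) =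
      (\<Sum>s\<le>l. \<Sum>m<n. \<Sum>r<n. d i (l - s) m * d j s r * p m r k)
    \<and> \<comment> \<open>(3) (a:b(1)):(c:b(2)) = (a:c(2)):(b\<cdot>c(1))\<close>
      (\<Sum>s\<le>j. \<Sum>m<n. \<Sum>r<n. d i s m * d l (j - s) r * d m r k) =
      (\<Sum>s\<le>l. \<Sum>m<n. \<Sum>r<n. d i (l - s) m * p j s r * d m r k))"

end

theory Submission
  imports Defs
begin

lemma cm_zero:
  assumes "coalg_mor n f" "i<n" "j<n"
  shows "f i j 0 = (if i = 0 \<and> j = 0 then 1 else 0)"
  using assms unfolding coalg_mor_def by blast

lemma cm_rec:
  assumes "coalg_mor n f" "2 \<le> n" "i<n" "j<n" "1 \<le> m" "m \<le> n"
  shows "(\<Sum>a\<le>i. \<Sum>c\<le>j. f a c 1 * f (i - a) (j - c) (m - 1)) = (if m < n then f i j m else 0)"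
proof -
  have "\<forall>u<n. \<forall>v<n. (if u + v < n then f i j (u + v) else 0) =
           (\<Sum>a\<le>i. \<Sum>c\<le>j. f a c u * f (i - a) (j - c) v)"
    using assms(1,3,4) unfolding coalg_mor_def by blast
  hence "(if 1 + (m-1) < n then f i j (1 + (m-1)) else 0) =
           (\<Sum>a\<le>i. \<Sum>c\<le>j. f a c 1 * f (i - a) (j - c) (m-1))"
  proof -
    have "1 < n" "m - 1 < n" using assms by auto
    thus ?thesis using \<open>\<forall>u<n. _\<close> by blast
  qed
  moreover have e: "1 + (m-1) = m" using assms(5) by simp
  ultimately show ?thesis unfolding e by simp
qed

lemma sum_except1:
  assumes "finite S" "x \<in> S" "\<And>y. y \<in> S \<Longrightarrow> y \<noteq> x \<Longrightarrow> g y = 0"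
  shows "sum g S = g x"
proof -
  have "sum g S = g x + sum g (S - {x})" using assms(1,2) by (simp add: sum.remove)
  also have "sum g (S - {x}) = 0" using assms(3) by (intro sum.neutral) auto
  finally show ?thesis by simp
qed

lemma sum_except2:
  assumes "finite S" "x \<in> S" "y \<in> S" "x \<noteq> y" "\<And>z. z \<in> S \<Longrightarrow> z \<noteq> x \<Longrightarrow> z \<noteq> y \<Longrightarrow> g z = 0"
  shows "sum g S = g x + g y"
proof -
  have "sum g S = g x + sum g (S - {x})" using assms(1,2) by (simp add: sum.remove)
  also have "sum g (S - {x}) = g y + sum g (S - {x} - {y})"
    using assms by (intro sum.remove) auto
  also have "sum g (S - {x} - {y}) = 0" using assms(5) by (intro sum.neutral) auto
  finally show ?thesis by simp
qed

lemma cm_weight: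
  assumes cm: "coalg_mor n f" and n2: "2 \<le> n"
    and h1: "\<And>a b. a<n \<Longrightarrow> b<n \<Longrightarrow> A*a + B*b < T \<Longrightarrow> f a b 1 = 0"
  shows "a<n \<Longrightarrow> b<n \<Longrightarrow> m<n \<Longrightarrow> A*a + B*b < T*m \<Longrightarrow> f a b m = 0"
proof (induction m arbitrary: a b)
  case 0 thus ?case by simp
next
  case (Suc m)
  have "f a b (Suc m) = (\<Sum>a'\<le>a. \<Sum>c\<le>b. f a' c 1 * f (a-a') (b-c) m)"
    using cm_rec[OF cm n2 Suc.prems(1,2), of "Suc m"] Suc.prems by simp
  also have "... = 0"
  proof (rule sum.neutral, rule ballI)
    fix a' assume a': "a' \<in> {..a}"
    show "(\<Sum>c\<le>b. f a' c 1 * f (a-a') (b-c) m) = 0"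
    proof (rule sum.neutral, rule ballI)
      fix c assume c: "c \<in> {..b}"
      show "f a' c 1 * f (a-a') (b-c) m = 0"
      proof (cases "A*a' + B*c < T")
        case True thus ?thesis using h1[of a' c] a' c Suc.prems by simp
      next
        case False
        have e1: "A*(a-a') = A*a - A*a'" by (simp add: diff_mult_distrib2)
        have e2: "B*(b-c) = B*b - B*c" by (simp add: diff_mult_distrib2)
        have le1: "A*a' \<le> A*a" using a' by (simp add: mult_le_mono2)
        have le2: "B*c \<le> B*b" using c by (simp add: mult_le_mono2)
        have "T * Suc m = T + T*m" by simp
        hence "A*(a-a') + B*(b-c) < T*m" unfolding e1 e2 using le1 le2 False Suc.prems(4) by linarith
        thus ?thesis using Suc.IH[of "a-a'" "b-c"] Suc.prems by simp
      qed
    qed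
  qed
  finally show ?case .
qed

lemma cm_001:
  assumes cm: "coalg_mor n f" and n2: "2 \<le> n"
  shows "f 0 0 1 = 0"
proof -
  have pw: "k < n \<Longrightarrow> f 0 0 k = f 0 0 1 ^ k" for k
  proof (induction k)
    case 0 thus ?case using cm_zero[OF cm] by simp
  next
    case (Suc k)
    have "f 0 0 (Suc k) = f 0 0 1 * f 0 0 k"
      using cm_rec[OF cm n2, of 0 0 "Suc k"] Suc.prems by simp
    thus ?case using Suc by simp
  qed
  have "f 0 0 1 * f 0 0 (n-1) = 0"
    using cm_rec[OF cm n2, of 0 0 n] n2 by simp
  hence "f 0 0 1 * f 0 0 1 ^ (n-1) = 0" using pw[of "n-1"] n2 by simp
  hence "f 0 0 1 ^ n = 0" using n2 by (metis power_eq_if not_numeral_le_zero)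
  thus ?thesis by simp
qed

lemma cm_val:
  assumes cm: "coalg_mor n f" and n2: "2 \<le> n"
  shows "a<n \<Longrightarrow> b<n \<Longrightarrow> m<n \<Longrightarrow> a + b < m \<Longrightarrow> f a b m = 0"
  using cm_weight[OF cm n2, of 1 1 1 a b m] cm_001[OF cm n2] by auto

lemma cm_diag:
  assumes cm: "coalg_mor n f" and n2: "2 \<le> n"
  shows "m<n \<Longrightarrow> f m 0 m = f 1 0 1 ^ m"
proof (induction m)
  case 0 thus ?case using cm_zero[OF cm] n2 by simp
next
  case (Suc m)
  have "f (Suc m) 0 (Suc m) = (\<Sum>a\<le>Suc m. \<Sum>c\<le>0. f a c 1 * f (Suc m - a) (0 - c) m)"
    using cm_rec[OF cm n2, of "Suc m" 0 "Suc m"] Suc.prems by simp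
  also have "... = (\<Sum>a\<le>Suc m. f a 0 1 * f (Suc m - a) 0 m)" by simp
  also have "... = f 1 0 1 * f (Suc m - 1) 0 m"
  proof (rule sum_except1)
    fix y assume y: "y \<in> {..Suc m}" "y \<noteq> 1"
    show "f y 0 1 * f (Suc m - y) 0 m = 0"
    proof (cases "y = 0")
      case True thus ?thesis using cm_001[OF cm n2] by simp
    next
      case False
      hence "f (Suc m - y) 0 m = 0" using y Suc.prems by (intro cm_val[OF cm n2]) auto
      thus ?thesis by simp
    qed
  qed auto
  finally show ?case using Suc by simp
qed

lemma cm_y0:
  fixes f :: "nat \<Rightarrow> nat \<Rightarrow> nat \<Rightarrow> 'a::field_char_0"
  assumes cm: "coalg_mor n f" and n2: "2 \<le> n" and al: "f 1 0 1 \<noteq> 0"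
  shows "j<n \<Longrightarrow> f 0 j 1 = 0"
proof (induction j rule: less_induct)
  case (less j)
  show ?case
  proof (cases "j = 0")
    case True thus ?thesis using cm_001[OF cm n2] by simp
  next
    case False
    hence j1: "1 \<le> j" by simp
    have IH: "\<And>b. b<j \<Longrightarrow> f 0 b 1 = 0" using less by simp
    have W0: "f a b 1 = 0" if ab: "a<n" "b<n" "j*a+1*b < j" for a b
    proof -
      have "a = 0" using ab(3) by (metis add_lessD1 mult_less_cancel1 less_one nat_mult_1_right) 
      thus "f a b 1 = 0" using ab IH by simp
    qed
    have W: "\<And>a b m. a<n \<Longrightarrow> b<n \<Longrightarrow> m<n \<Longrightarrow> j*a + b < j*m \<Longrightarrow> f a b m = 0"
      using cm_weight[OF cm n2, of j 1 j, OF W0] by simp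
    define \<alpha> where "\<alpha> = f 1 0 1"
    define \<gamma> where "\<gamma> = f 0 j 1"
    have S: "(\<Sum>a\<le>Suc k. \<Sum>c\<le>j. f a c 1 * f (Suc k - a) (j-c) (Suc k))
              = \<alpha> * f k j (Suc k) + \<gamma> * f (Suc k) 0 (Suc k)" if kn: "Suc k < n" for k
    proof -
      have "(\<Sum>a\<le>Suc k. \<Sum>c\<le>j. f a c 1 * f (Suc k - a) (j-c) (Suc k))
           = (\<Sum>c\<le>j. f 0 c 1 * f (Suc k - 0) (j-c) (Suc k))
           + (\<Sum>c\<le>j. f 1 c 1 * f (Suc k - 1) (j-c) (Suc k))"
      proof (rule sum_except2)
        fix a assume a: "a \<in> {..Suc k}" "a \<noteq> 0" "a \<noteq> 1"
        show "(\<Sum>c\<le>j. f a c 1 * f (Suc k - a) (j-c) (Suc k)) = 0"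
        proof (rule sum.neutral, rule ballI)
          fix c assume c: "c \<in> {..j}"
          have "Suc k - a + 1 \<le> k" using a by auto
          hence "j * (Suc k - a + 1) \<le> j * k" by (rule mult_le_mono2)
          moreover have "j * (Suc k - a + 1) = j * (Suc k - a) + j" by simp
          moreover have "j * Suc k = j + j * k" by simp
          moreover have "j - c \<le> j" by simp
          ultimately have "j * (Suc k - a) + (j - c) < j * Suc k" using j1 by linarith
          hence "f (Suc k - a) (j-c) (Suc k) = 0" using kn c less.prems by (intro W) auto
          thus "f a c 1 * f (Suc k - a) (j - c) (Suc k) = 0" by simp
        qed
      qed auto
      also have "(\<Sum>c\<le>j. f 0 c 1 * f (Suc k - 0) (j-c) (Suc k)) = \<gamma> * f (Suc k) 0 (Suc k)"
      proof -
        have "(\<Sum>c\<le>j. f 0 c 1 * f (Suc k - 0) (j-c) (Suc k)) = f 0 j 1 * f (Suc k - 0) (j-j) (Suc k)"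
        proof (rule sum_except1)
          fix c assume "c \<in> {..j}" "c \<noteq> j"
          hence "c < j" by simp
          thus "f 0 c 1 * f (Suc k - 0) (j - c) (Suc k) = 0" using IH by simp
        qed auto
        thus ?thesis by (simp add: \<gamma>_def)
      qed
      also have "(\<Sum>c\<le>j. f 1 c 1 * f (Suc k - 1) (j-c) (Suc k)) = \<alpha> * f k j (Suc k)"
      proof -
        have "(\<Sum>c\<le>j. f 1 c 1 * f (Suc k - 1) (j-c) (Suc k)) = f 1 0 1 * f (Suc k - 1) (j-0) (Suc k)"
        proof (rule sum_except1)
          fix c assume c: "c \<in> {..j}" "c \<noteq> 0"
          have "j * k + (j - c) < j * Suc k" using c j1 by simp
          hence "f (Suc k - 1) (j-c) (Suc k) = 0" using kn c less.prems by (intro W) auto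
          thus "f 1 c 1 * f (Suc k - 1) (j - c) (Suc k) = 0" by simp
        qed auto
        thus ?thesis by (simp add: \<alpha>_def)
      qed
      finally show ?thesis by simp
    qed
    have X: "Suc k < n \<Longrightarrow> f k j (Suc k) = of_nat (Suc k) * \<alpha>^k * \<gamma>" for k
    proof (induction k)
      case 0 thus ?case by (simp add: \<gamma>_def)
    next
      case (Suc k)
      have "f (Suc k) j (Suc (Suc k)) = (\<Sum>a\<le>Suc k. \<Sum>c\<le>j. f a c 1 * f (Suc k - a) (j-c) (Suc k))"
        using cm_rec[OF cm n2, of "Suc k" j "Suc (Suc k)"] Suc.prems less.prems by simp
      also have "... = \<alpha> * f k j (Suc k) + \<gamma> * f (Suc k) 0 (Suc k)" using S Suc.prems by simp
      also have "... = \<alpha> * (of_nat (Suc k) * \<alpha>^k * \<gamma>) + \<gamma> * \<alpha>^Suc k"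
        using Suc cm_diag[OF cm n2, of "Suc k"] by (simp add: \<alpha>_def)
      also have "... = of_nat (Suc (Suc k)) * \<alpha>^Suc k * \<gamma>" by (simp add: algebra_simps)
      finally show ?case .
    qed
    obtain k where nk: "n = Suc (Suc k)" using n2 by (metis add_2_eq_Suc le_Suc_ex)
    have "0 = (\<Sum>a\<le>Suc k. \<Sum>c\<le>j. f a c 1 * f (Suc k - a) (j-c) (Suc k))"
      using cm_rec[OF cm n2, of "Suc k" j n] nk less.prems by simp
    also have "... = \<alpha> * f k j (Suc k) + \<gamma> * f (Suc k) 0 (Suc k)" using S nk by simp
    also have "... = \<alpha> * (of_nat (Suc k) * \<alpha>^k * \<gamma>) + \<gamma> * \<alpha>^Suc k"
      using X[of k] nk cm_diag[OF cm n2, of "Suc k"] by (simp add: \<alpha>_def)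
    also have "... = of_nat n * \<alpha>^Suc k * \<gamma>" using nk by (simp add: algebra_simps)
    finally have "of_nat n * \<alpha>^Suc k * \<gamma> = 0" by simp
    moreover have "of_nat n \<noteq> (0::'a)" using n2 by simp
    ultimately show ?thesis using al by (simp add: \<alpha>_def \<gamma>_def)
  qed
qed

lemma cm_xdiv:
  fixes f :: "nat \<Rightarrow> nat \<Rightarrow> nat \<Rightarrow> 'a::field_char_0"
  assumes cm: "coalg_mor n f" and n2: "2 \<le> n" and al: "f 1 0 1 \<noteq> 0"
  shows "a<n \<Longrightarrow> b<n \<Longrightarrow> m<n \<Longrightarrow> a < m \<Longrightarrow> f a b m = 0"
  using cm_weight[OF cm n2, of 1 0 1 a b m] cm_y0[OF cm n2 al] by auto

lemma sum3_except1:
  assumes "finite S" "finite M" "finite Q" "s0 \<in> S" "m0 \<in> M" "r0 \<in> Q"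
    "\<And>s m r. s \<in> S \<Longrightarrow> m \<in> M \<Longrightarrow> r \<in> Q \<Longrightarrow> (s,m,r) \<noteq> (s0,m0,r0) \<Longrightarrow> g s m r = 0"
  shows "(\<Sum>s\<in>S. \<Sum>m\<in>M. \<Sum>r\<in>Q. g s m r) = g s0 m0 r0"
proof -
  have "(\<Sum>s\<in>S. \<Sum>m\<in>M. \<Sum>r\<in>Q. g s m r) = (\<Sum>m\<in>M. \<Sum>r\<in>Q. g s0 m r)"
    by (rule sum_except1) (use assms in \<open>auto intro!: sum.neutral\<close>)
  also have "... = (\<Sum>r\<in>Q. g s0 m0 r)"
    by (rule sum_except1) (use assms in \<open>auto intro!: sum.neutral\<close>)
  also have "... = g s0 m0 r0"
    by (rule sum_except1) (use assms in \<open>auto intro!: sum.neutral\<close>)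
  finally show ?thesis .
qed

lemma sum3_except2:
  assumes "finite S" "finite M" "finite Q" "s0 \<in> S" "m0 \<in> M" "r0 \<in> Q"
    "s1 \<in> S" "m1 \<in> M" "r1 \<in> Q" "(s0,m0,r0) \<noteq> (s1,m1,r1)"
    "\<And>s m r. s \<in> S \<Longrightarrow> m \<in> M \<Longrightarrow> r \<in> Q \<Longrightarrow> (s,m,r) \<noteq> (s0,m0,r0) \<Longrightarrow> (s,m,r) \<noteq> (s1,m1,r1) \<Longrightarrow> g s m r = 0"
  shows "(\<Sum>s\<in>S. \<Sum>m\<in>M. \<Sum>r\<in>Q. g s m r) = g s0 m0 r0 + g s1 m1 r1"
proof -
  define g0 where "g0 s m r = (if (s,m,r) = (s0,m0,r0) then g s m r else 0)" for s m r
  define g1 where "g1 s m r = (if (s,m,r) = (s0,m0,r0) then 0 else g s m r)" for s m r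
  have "(\<Sum>s\<in>S. \<Sum>m\<in>M. \<Sum>r\<in>Q. g s m r) = (\<Sum>s\<in>S. \<Sum>m\<in>M. \<Sum>r\<in>Q. g0 s m r + g1 s m r)"
    by (intro sum.cong refl) (simp add: g0_def g1_def)
  also have "... = (\<Sum>s\<in>S. \<Sum>m\<in>M. \<Sum>r\<in>Q. g0 s m r) + (\<Sum>s\<in>S. \<Sum>m\<in>M. \<Sum>r\<in>Q. g1 s m r)"
    by (simp add: sum.distrib)
  also have "(\<Sum>s\<in>S. \<Sum>m\<in>M. \<Sum>r\<in>Q. g0 s m r) = g0 s0 m0 r0"
    by (rule sum3_except1) (use assms in \<open>auto simp: g0_def\<close>)
  also have "(\<Sum>s\<in>S. \<Sum>m\<in>M. \<Sum>r\<in>Q. g1 s m r) = g1 s1 m1 r1"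
    by (rule sum3_except1) (use assms in \<open>auto simp: g1_def\<close>)
  finally show ?thesis using assms(10) unfolding g0_def g1_def by auto
qed

lemma cm_id_pow:
  assumes cm: "coalg_mor n f" and n2: "2 \<le> n"
    and h: "\<And>a. a<n \<Longrightarrow> f a 0 1 = (if a = 1 then 1 else 0)"
  shows "a<n \<Longrightarrow> r<n \<Longrightarrow> f a 0 r = (if a = r then 1 else 0)"
proof (induction r arbitrary: a)
  case 0 thus ?case using cm_zero[OF cm] n2 by simp
next
  case (Suc r)
  have "f a 0 (Suc r) = (\<Sum>a'\<le>a. \<Sum>c\<le>0. f a' c 1 * f (a - a') (0 - c) r)"
    using cm_rec[OF cm n2, of a 0 "Suc r"] Suc.prems by simp
  also have "... = (\<Sum>a'\<le>a. f a' 0 1 * f (a - a') 0 r)" by simp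
  also have "... = (if a = Suc r then 1 else 0)"
  proof (cases "a = 0")
    case True thus ?thesis using h[of 0] Suc.prems by simp
  next
    case False
    have "(\<Sum>a'\<le>a. f a' 0 1 * f (a - a') 0 r) = f 1 0 1 * f (a - 1) 0 r"
      by (rule sum_except1) (use False Suc.prems h in auto)
    thus ?thesis using h[of 1] Suc.IH[of "a-1"] Suc.prems False n2 by auto
  qed
  finally show ?case .
qed

lemma cm_gap:
  assumes cm: "coalg_mor n f" and n2: "2 \<le> n" and h1: "f 1 0 1 = 1" and t2: "2 \<le> t"
    and hg: "\<And>a. 2 \<le> a \<Longrightarrow> a < t \<Longrightarrow> a < n \<Longrightarrow> f a 0 1 = 0"
  shows "1 \<le> r \<Longrightarrow> r < a \<Longrightarrow> a < r + t - 1 \<Longrightarrow> a<n \<Longrightarrow> r<n \<Longrightarrow> f a 0 r = 0"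
proof (induction r arbitrary: a)
  case 0 thus ?case by simp
next
  case (Suc r)
  show ?case
  proof (cases "r = 0")
    case True thus ?thesis using hg Suc.prems by simp
  next
    case False
    have "f a 0 (Suc r) = (\<Sum>a'\<le>a. \<Sum>c\<le>0. f a' c 1 * f (a - a') (0 - c) r)"
      using cm_rec[OF cm n2, of a 0 "Suc r"] Suc.prems by simp
    also have "... = (\<Sum>a'\<le>a. f a' 0 1 * f (a - a') 0 r)" by simp
    also have "... = 0"
    proof (rule sum.neutral, rule ballI)
      fix a' assume a': "a' \<in> {..a}"
      show "f a' 0 1 * f (a - a') 0 r = 0"
      proof (cases "a' = 0")
        case True thus ?thesis using cm_001[OF cm n2] by simp
      next
        case a0: False
        show ?thesis
        proof (cases "a' = 1")
          case True thus ?thesis using Suc.IH[of "a-1"] Suc.prems False by simp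
        next
          case a1: False
          show ?thesis
          proof (cases "a' < t")
            case True thus ?thesis using hg[of a'] a0 a1 a' Suc.prems by simp
          next
            case False
            hence "f (a - a') 0 r = 0" using a' Suc.prems by (intro cm_val[OF cm n2]) auto
            thus ?thesis by simp
          qed
        qed
      qed
    qed
    finally show ?thesis .
  qed
qed

lemma cm_ylin:
  assumes cm: "coalg_mor n f" and n2: "2 \<le> n"
    and hid: "\<And>a r. a<n \<Longrightarrow> r<n \<Longrightarrow> f a 0 r = (if a = r then 1 else 0)"
    and h01: "f 0 1 1 = 0"
  shows "2 \<le> m \<Longrightarrow> m < n \<Longrightarrow> b < n \<Longrightarrow>
    f b 1 m = (if 1 \<le> b then f (b-1) 1 (m-1) else 0) + (if m-1 \<le> b then f (b-(m-1)) 1 1 else 0)"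
proof -
  assume m: "2 \<le> m" "m < n" "b < n"
  have "f b 1 m = (\<Sum>a\<le>b. \<Sum>c\<le>1. f a c 1 * f (b - a) (1 - c) (m-1))"
    using cm_rec[OF cm n2, of b 1 m] m n2 by simp
  also have "... = (\<Sum>a\<le>b. f a 0 1 * f (b - a) 1 (m-1)) + (\<Sum>a\<le>b. f a 1 1 * f (b - a) 0 (m-1))"
    by (simp add: sum.distrib)
  also have "(\<Sum>a\<le>b. f a 0 1 * f (b - a) 1 (m-1)) = (if 1 \<le> b then f (b-1) 1 (m-1) else 0)"
  proof (cases "1 \<le> b")
    case True
    have "(\<Sum>a\<le>b. f a 0 1 * f (b - a) 1 (m-1)) = f 1 0 1 * f (b - 1) 1 (m-1)"
      by (rule sum_except1) (use True m n2 hid in auto)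
    thus ?thesis using True hid[of 1 1] n2 by simp
  next
    case False hence "b = 0" by simp
    thus ?thesis using hid[of 0 1] m n2 by simp
  qed
  also have "(\<Sum>a\<le>b. f a 1 1 * f (b - a) 0 (m-1)) = (if m-1 \<le> b then f (b-(m-1)) 1 1 else 0)"
  proof (cases "m-1 \<le> b")
    case True
    have "(\<Sum>a\<le>b. f a 1 1 * f (b - a) 0 (m-1)) = f (b-(m-1)) 1 1 * f (b - (b-(m-1))) 0 (m-1)"
      by (rule sum_except1) (use True m n2 hid in auto)
    thus ?thesis using True hid[of "m-1" "m-1"] m by simp
  next
    case False
    have "(\<Sum>a\<le>b. f a 1 1 * f (b - a) 0 (m-1)) = 0"
      by (rule sum.neutral) (use False m n2 hid in auto)
    thus ?thesis using False by simp
  qed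
  finally show ?thesis .
qed

lemma sum3_ex1:
  assumes "finite S" "finite M" "finite Q" "si \<in> S" "mi \<in> M" "ri \<in> Q"
    "\<And>s m r. s \<in> S \<Longrightarrow> m \<in> M \<Longrightarrow> r \<in> Q \<Longrightarrow> (s,m,r) \<noteq> (si,mi,ri) \<Longrightarrow> g s m r = 0"
    "v = g si mi ri"
  shows "(\<Sum>s\<in>S. \<Sum>m\<in>M. \<Sum>r\<in>Q. g s m r) = v"
  using sum3_except1[OF assms(1-7)] assms(8) by simp

lemma sum3_ex2:
  assumes "finite S" "finite M" "finite Q" "si \<in> S" "mi \<in> M" "ri \<in> Q"
    "sj \<in> S" "mj \<in> M" "rj \<in> Q" "(si,mi,ri) \<noteq> (sj,mj,rj)"
    "\<And>s m r. s \<in> S \<Longrightarrow> m \<in> M \<Longrightarrow> r \<in> Q \<Longrightarrow> (s,m,r) \<noteq> (si,mi,ri) \<Longrightarrow> (s,m,r) \<noteq> (sj,mj,rj) \<Longrightarrow> g s m r = 0"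
    "v = g si mi ri + g sj mj rj"
  shows "(\<Sum>s\<in>S. \<Sum>m\<in>M. \<Sum>r\<in>Q. g s m r) = v"
  using sum3_except2[OF assms(1-11)] assms(12) by simp

lemma sum_ex1:
  assumes "finite S" "x \<in> S" "\<And>y. y \<in> S \<Longrightarrow> y \<noteq> x \<Longrightarrow> g y = 0" "v = g x"
  shows "sum g S = v"
  using sum_except1[OF assms(1-3)] assms(4) by simp

lemma sum2_ex1:
  assumes "finite M" "finite Q" "mi \<in> M" "ri \<in> Q"
    "\<And>m r. m \<in> M \<Longrightarrow> r \<in> Q \<Longrightarrow> (m,r) \<noteq> (mi,ri) \<Longrightarrow> g m r = 0"
    "v = g mi ri"
  shows "(\<Sum>m\<in>M. \<Sum>r\<in>Q. g m r) = v"
proof -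
  have "(\<Sum>m\<in>M. \<Sum>r\<in>Q. g m r) = (\<Sum>r\<in>Q. g mi r)"
    by (rule sum_except1) (use assms in \<open>auto intro!: sum.neutral\<close>)
  also have "... = g mi ri"
    by (rule sum_except1) (use assms in \<open>auto intro!: sum.neutral\<close>)
  finally show ?thesis using assms(6) by simp
qed

lemma sum_atMost_1: "(\<Sum>s\<le>(1::nat). F s) = F 0 + F 1"
  by (simp add: atMost_Suc add.commute)

theorem proposition4p2:
  fixes n :: nat
    and p d :: "nat \<Rightarrow> nat \<Rightarrow> nat \<Rightarrow> 'a::field_char_0"
  assumes "alg_closed TYPE('a)"
    and "n \<ge> 2"
    and "regular_q_cycle n p d"
    and "p 1 1 1 \<noteq> 0"
  shows "\<forall>b<n. \<forall>c<n. d b 1 c = p b 1 c"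
proof -
  have n2: "2 \<le> n" using assms(2) .
  have n1: "1 < n" using n2 by simp
  have cmp: "coalg_mor n p" and cmd: "coalg_mor n d"
    using assms(3) unfolding regular_q_cycle_def regular_q_magma_def by auto
  obtain L R where cmL: "coalg_mor n L" and cmR: "coalg_mor n R" and
    reg: "\<forall>i<n. \<forall>j<n. \<forall>k<n.
        (\<Sum>s\<le>j. \<Sum>m<n. L i s m * p m (j - s) k) = (if j = 0 \<and> i = k then 1 else 0)
      \<and> (\<Sum>s\<le>j. \<Sum>m<n. p i s m * L m (j - s) k) = (if j = 0 \<and> i = k then 1 else 0)
      \<and> (\<Sum>s\<le>j. \<Sum>m<n. d i (j - s) m * R m s k) = (if j = 0 \<and> i = k then 1 else 0)
      \<and> (\<Sum>s\<le>j. \<Sum>m<n. R i (j - s) m * d m s k) = (if j = 0 \<and> i = k then 1 else 0)"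
    using assms(3) unfolding regular_q_cycle_def regular_q_magma_def by blast
  have cyc: "\<forall>i<n. \<forall>j<n. \<forall>l<n. \<forall>k<n.
      (\<Sum>s\<le>j. \<Sum>m<n. \<Sum>r<n. p i s m * d l (j - s) r * p m r k) =
      (\<Sum>s\<le>l. \<Sum>m<n. \<Sum>r<n. p i (l - s) m * p j s r * p m r k)
    \<and> (\<Sum>s\<le>j. \<Sum>m<n. \<Sum>r<n. p i s m * p l (j - s) r * d m r k) =
      (\<Sum>s\<le>l. \<Sum>m<n. \<Sum>r<n. d i (l - s) m * d j s r * p m r k)
    \<and> (\<Sum>s\<le>j. \<Sum>m<n. \<Sum>r<n. d i s m * d l (j - s) r * d m r k) =
      (\<Sum>s\<le>l. \<Sum>m<n. \<Sum>r<n. d i (l - s) m * p j s r * d m r k)"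
    using assms(3) unfolding regular_q_cycle_def by blast
  have C1: "\<And>i j l k. i<n \<Longrightarrow> j<n \<Longrightarrow> l<n \<Longrightarrow> k<n \<Longrightarrow>
      (\<Sum>s\<le>j. \<Sum>m<n. \<Sum>r<n. p i s m * d l (j - s) r * p m r k) =
      (\<Sum>s\<le>l. \<Sum>m<n. \<Sum>r<n. p i (l - s) m * p j s r * p m r k)"
    using cyc by blast
  have C2: "\<And>i j l k. i<n \<Longrightarrow> j<n \<Longrightarrow> l<n \<Longrightarrow> k<n \<Longrightarrow>
      (\<Sum>s\<le>j. \<Sum>m<n. \<Sum>r<n. p i s m * p l (j - s) r * d m r k) =
      (\<Sum>s\<le>l. \<Sum>m<n. \<Sum>r<n. d i (l - s) m * d j s r * p m r k)"
    using cyc by blast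
  define c where "c = p 1 1 1"
  have c0: "c \<noteq> 0" using assms(4) c_def by simp
  have al0: "p 1 0 1 \<noteq> 0"
  proof -
    have "(\<Sum>s\<le>0. \<Sum>m<n. L 1 s m * p m (0 - s) 1) = 1" using reg[rule_format, of 1 0 1] n1 by auto
    hence "(\<Sum>m<n. L 1 0 m * p m 0 1) = 1" by simp
    moreover have "(\<Sum>m<n. L 1 0 m * p m 0 1) = L 1 0 1 * p 1 0 1"
    proof (rule sum_except1)
      fix m assume m: "m \<in> {..<n}" "m \<noteq> 1"
      show "L 1 0 m * p m 0 1 = 0"
      proof (cases "m = 0")
        case True thus ?thesis using cm_zero[OF cmL, of 1 0] n1 by simp
      next
        case False thus ?thesis using cm_val[OF cmL n2, of 1 0 m] m n1 by simp
      qed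
    qed (use n1 in auto)
    ultimately show ?thesis by auto
  qed
  have de0: "d 1 0 1 \<noteq> 0"
  proof -
    have "(\<Sum>s\<le>0. \<Sum>m<n. d 1 (0 - s) m * R m s 1) = 1" using reg[rule_format, of 1 0 1] n1 by auto
    hence "(\<Sum>m<n. d 1 0 m * R m 0 1) = 1" by simp
    moreover have "(\<Sum>m<n. d 1 0 m * R m 0 1) = d 1 0 1 * R 1 0 1"
    proof (rule sum_except1)
      fix m assume m: "m \<in> {..<n}" "m \<noteq> 1"
      show "d 1 0 m * R m 0 1 = 0"
      proof (cases "m = 0")
        case True thus ?thesis using cm_zero[OF cmd, of 1 0] n1 by simp
      next
        case False thus ?thesis using cm_val[OF cmd n2, of 1 0 m] m n1 by simp
      qed
    qed (use n1 in auto)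
    ultimately show ?thesis by auto
  qed
  have Px: "\<And>a b m. a<n \<Longrightarrow> b<n \<Longrightarrow> m<n \<Longrightarrow> a<m \<Longrightarrow> p a b m = 0"
    using cm_xdiv[OF cmp n2 al0] by blast
  have Dx: "\<And>a b m. a<n \<Longrightarrow> b<n \<Longrightarrow> m<n \<Longrightarrow> a<m \<Longrightarrow> d a b m = 0"
    using cm_xdiv[OF cmd n2 de0] by blast
  have P0: "\<And>a b. a<n \<Longrightarrow> b<n \<Longrightarrow> p a b 0 = (if a = 0 \<and> b = 0 then 1 else 0)"
    using cm_zero[OF cmp] by blast
  have D0: "\<And>a b. a<n \<Longrightarrow> b<n \<Longrightarrow> d a b 0 = (if a = 0 \<and> b = 0 then 1 else 0)"
    using cm_zero[OF cmd] by blast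
  have p1z: "\<And>b m. b<n \<Longrightarrow> m<n \<Longrightarrow> m \<noteq> 1 \<Longrightarrow> p 1 b m = 0"
  proof -
    fix b m assume h: "b<n" "m<n" "m \<noteq> 1"
    show "p 1 b m = 0"
    proof (cases "m = 0")
      case True thus ?thesis using P0[of 1 b] h n1 by simp
    next
      case False thus ?thesis using Px[of 1 b m] h n1 by simp
    qed
  qed
  have d1z: "\<And>b m. b<n \<Longrightarrow> m<n \<Longrightarrow> m \<noteq> 1 \<Longrightarrow> d 1 b m = 0"
  proof -
    fix b m assume h: "b<n" "m<n" "m \<noteq> 1"
    show "d 1 b m = 0"
    proof (cases "m = 0")
      case True thus ?thesis using D0[of 1 b] h n1 by simp
    next
      case False thus ?thesis using Dx[of 1 b m] h n1 by simp
    qed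
  qed
  have p0z: "\<And>b r. b<n \<Longrightarrow> r<n \<Longrightarrow> b \<noteq> 0 \<or> r \<noteq> 0 \<Longrightarrow> p 0 b r = 0"
  proof -
    fix b r assume h: "b<n" "r<n" "b \<noteq> 0 \<or> r \<noteq> 0"
    show "p 0 b r = 0"
    proof (cases "r = 0")
      case True thus ?thesis using P0[of 0 b] h by simp
    next
      case False thus ?thesis using Px[of 0 b r] h by simp
    qed
  qed
  have d0z: "\<And>b r. b<n \<Longrightarrow> r<n \<Longrightarrow> b \<noteq> 0 \<or> r \<noteq> 0 \<Longrightarrow> d 0 b r = 0"
  proof -
    fix b r assume h: "b<n" "r<n" "b \<noteq> 0 \<or> r \<noteq> 0"
    show "d 0 b r = 0"
    proof (cases "r = 0")
      case True thus ?thesis using D0[of 0 b] h by simp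
    next
      case False thus ?thesis using Dx[of 0 b r] h by simp
    qed
  qed
  have p000: "p 0 0 0 = 1" "d 0 0 0 = 1" using P0[of 0 0] D0[of 0 0] n1 by auto
  have al1: "p 1 0 1 = 1"
  proof -
    have "(\<Sum>s\<le>1. \<Sum>m<n. \<Sum>r<n. p 1 s m * d 0 (1 - s) r * p m r 1) = p 1 1 1 * d 0 (1-1) 0 * p 1 0 1"
    proof (rule sum3_ex1[where si=1 and mi=1 and ri=0])
      fix s m r :: nat assume h: "s \<in> {..1}" "m \<in> {..<n}" "r \<in> {..<n}" "(s,m,r) \<noteq> (1,1,0)"
      show "p 1 s m * d 0 (1 - s) r * p m r 1 = 0"
      proof (cases "r = 0 \<and> s = 1")
        case True thus ?thesis using h p1z[of 1 m] n1 by auto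
      next
        case False thus ?thesis using h d0z[of "1-s" r] n1 by auto
      qed
    qed (use n1 in auto)
    moreover have "(\<Sum>s\<le>0. \<Sum>m<n. \<Sum>r<n. p 1 (0 - s) m * p 1 s r * p m r 1) = p 1 0 1 * p 1 0 1 * p 1 1 1"
    proof (rule sum3_ex1[where si=0 and mi=1 and ri=1])
      fix s m r :: nat assume h: "s \<in> {..0}" "m \<in> {..<n}" "r \<in> {..<n}" "(s,m,r) \<noteq> (0,1,1)"
      show "p 1 (0 - s) m * p 1 s r * p m r 1 = 0"
        using h p1z[of 0 m] p1z[of 0 r] n1 by auto
    qed (use n1 in auto)
    ultimately have "c * p 1 0 1 = p 1 0 1 * p 1 0 1 * c"
      using C1[of 1 1 0 1] n1 p000 c_def by simp
    thus ?thesis using c0 al0 by simp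
  qed
  have de1: "d 1 0 1 = 1"
  proof -
    have "(\<Sum>s\<le>0. \<Sum>m<n. \<Sum>r<n. p 1 s m * d 1 (0 - s) r * p m r 1) = p 1 0 1 * d 1 0 1 * p 1 1 1"
    proof (rule sum3_ex1[where si=0 and mi=1 and ri=1])
      fix s m r :: nat assume h: "s \<in> {..0}" "m \<in> {..<n}" "r \<in> {..<n}" "(s,m,r) \<noteq> (0,1,1)"
      show "p 1 s m * d 1 (0 - s) r * p m r 1 = 0"
        using h p1z[of 0 m] d1z[of 0 r] n1 by auto
    qed (use n1 in auto)
    moreover have "(\<Sum>s\<le>1. \<Sum>m<n. \<Sum>r<n. p 1 (1 - s) m * p 0 s r * p m r 1) = p 1 1 1 * p 0 0 0 * p 1 0 1"
    proof (rule sum3_ex1[where si=0 and mi=1 and ri=0])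
      fix s m r :: nat assume h: "s \<in> {..1}" "m \<in> {..<n}" "r \<in> {..<n}" "(s,m,r) \<noteq> (0,1,0)"
      show "p 1 (1 - s) m * p 0 s r * p m r 1 = 0"
      proof (cases "r = 0 \<and> s = 0")
        case True thus ?thesis using h p1z[of 1 m] n1 by auto
      next
        case False thus ?thesis using h p0z[of s r] n1 by auto
      qed
    qed (use n1 in auto)
    ultimately have "d 1 0 1 * c = c"
      using C1[of 1 0 1 1] n1 p000 c_def al1 by simp
    thus ?thesis using c0 by simp
  qed
  have phi: "p t 0 1 = (if t = 1 then 1 else 0)" if "t<n" for t
    using that
  proof (induction t rule: less_induct)
    case (less t)
    show ?case
    proof (cases "t \<le> 1")
      case True thus ?thesis using cm_001[OF cmp n2] al1 by (cases t) auto
    next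
      case False
      hence t2: "2 \<le> t" by simp
      have gap: "\<And>a. 2 \<le> a \<Longrightarrow> a < t \<Longrightarrow> a < n \<Longrightarrow> p a 0 1 = 0" using less by auto
      have G: "\<And>a r. 1 \<le> r \<Longrightarrow> r < a \<Longrightarrow> a < r + t - 1 \<Longrightarrow> a<n \<Longrightarrow> r<n \<Longrightarrow> p a 0 r = 0"
        using cm_gap[OF cmp n2 al1 t2 gap] by blast
      have diag: "p t 0 t = 1" using cm_diag[OF cmp n2, of t] al1 less.prems by simp
      have "(\<Sum>s\<le>t. \<Sum>m<n. \<Sum>r<n. p 1 s m * d 0 (t - s) r * p m r 1) = p 1 t 1"
      proof (rule sum3_ex1[where si=t and mi=1 and ri=0])
        fix s m r :: nat assume h: "s \<in> {..t}" "m \<in> {..<n}" "r \<in> {..<n}" "(s,m,r) \<noteq> (t,1,0)"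
        show "p 1 s m * d 0 (t - s) r * p m r 1 = 0"
        proof (cases "r = 0 \<and> s = t")
          case True thus ?thesis using h p1z[of t m] less.prems by auto
        next
          case False thus ?thesis using h d0z[of "t-s" r] less.prems by auto
        qed
      qed (use n1 less.prems p000 al1 in auto)
      moreover have "(\<Sum>s\<le>0. \<Sum>m<n. \<Sum>r<n. p 1 (0 - s) m * p t s r * p m r 1) = p t 0 1 * c + p 1 t 1"
      proof (rule sum3_ex2[where si=0 and mi=1 and ri=1 and sj=0 and mj=1 and rj=t])
        fix s m r :: nat assume h: "s \<in> {..0}" "m \<in> {..<n}" "r \<in> {..<n}" "(s,m,r) \<noteq> (0,1,1)" "(s,m,r) \<noteq> (0,1,t)"
        show "p 1 (0 - s) m * p t s r * p m r 1 = 0"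
        proof (cases "m = 1")
          case False thus ?thesis using h p1z[of 0 m] n1 by auto
        next
          case m1: True
          have r1: "r \<noteq> 1" "r \<noteq> t" using h m1 by auto
          have "p t 0 r = 0"
          proof (cases "r = 0")
            case True thus ?thesis using P0[of t 0] t2 less.prems n1 by simp
          next
            case r0: False
            show ?thesis
            proof (cases "r < t")
              case True thus ?thesis using G[of r t] r0 r1 h True less.prems by auto
            next
              case False thus ?thesis using Px[of t 0 r] h r1 less.prems n1 by auto
            qed
          qed
          thus ?thesis using h by simp
        qed
      qed (use n1 less.prems t2 al1 diag c_def in auto)
      ultimately have "p 1 t 1 = p t 0 1 * c + p 1 t 1"
        using C1[of 1 t 0 1] n1 less.prems by simp
      thus ?thesis using c0 t2 by simp
    qed
  qed
  have psi: "d t 0 1 = (if t = 1 then 1 else 0)" if "t<n" for t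
    using that
  proof (induction t rule: less_induct)
    case (less t)
    show ?case
    proof (cases "t \<le> 1")
      case True thus ?thesis using cm_001[OF cmd n2] de1 by (cases t) auto
    next
      case False
      hence t2: "2 \<le> t" by simp
      have gap: "\<And>a. 2 \<le> a \<Longrightarrow> a < t \<Longrightarrow> a < n \<Longrightarrow> d a 0 1 = 0" using less by auto
      have G: "\<And>a r. 1 \<le> r \<Longrightarrow> r < a \<Longrightarrow> a < r + t - 1 \<Longrightarrow> a<n \<Longrightarrow> r<n \<Longrightarrow> d a 0 r = 0"
        using cm_gap[OF cmd n2 de1 t2 gap] by blast
      have diag: "d t 0 t = 1" using cm_diag[OF cmd n2, of t] de1 less.prems by simp
      have "(\<Sum>s\<le>0. \<Sum>m<n. \<Sum>r<n. p 1 s m * d t (0 - s) r * p m r 1) = d t 0 1 * c + p 1 t 1"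
      proof (rule sum3_ex2[where si=0 and mi=1 and ri=1 and sj=0 and mj=1 and rj=t])
        fix s m r :: nat assume h: "s \<in> {..0}" "m \<in> {..<n}" "r \<in> {..<n}" "(s,m,r) \<noteq> (0,1,1)" "(s,m,r) \<noteq> (0,1,t)"
        show "p 1 s m * d t (0 - s) r * p m r 1 = 0"
        proof (cases "m = 1")
          case False thus ?thesis using h p1z[of 0 m] n1 by auto
        next
          case m1: True
          have r1: "r \<noteq> 1" "r \<noteq> t" using h m1 by auto
          have "d t 0 r = 0"
          proof (cases "r = 0")
            case True thus ?thesis using D0[of t 0] t2 less.prems n1 by simp
          next
            case r0: False
            show ?thesis
            proof (cases "r < t")
              case True thus ?thesis using G[of r t] r0 r1 h True less.prems by auto
            next
              case False thus ?thesis using Dx[of t 0 r] h r1 less.prems n1 by auto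
            qed
          qed
          thus ?thesis using h by simp
        qed
      qed (use n1 less.prems t2 al1 diag c_def in auto)
      moreover have "(\<Sum>s\<le>t. \<Sum>m<n. \<Sum>r<n. p 1 (t - s) m * p 0 s r * p m r 1) = p 1 t 1"
      proof (rule sum3_ex1[where si=0 and mi=1 and ri=0])
        fix s m r :: nat assume h: "s \<in> {..t}" "m \<in> {..<n}" "r \<in> {..<n}" "(s,m,r) \<noteq> (0,1,0)"
        show "p 1 (t - s) m * p 0 s r * p m r 1 = 0"
        proof (cases "r = 0 \<and> s = 0")
          case True thus ?thesis using h p1z[of t m] less.prems by auto
        next
          case False thus ?thesis using h p0z[of s r] less.prems by auto
        qed
      qed (use n1 less.prems p000 al1 in auto)
      ultimately have "d t 0 1 * c + p 1 t 1 = p 1 t 1"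
        using C1[of 1 0 t 1] n1 less.prems by simp
      thus ?thesis using c0 t2 by simp
    qed
  qed
  have Pid: "\<And>a r. a<n \<Longrightarrow> r<n \<Longrightarrow> p a 0 r = (if a = r then 1 else 0)"
    using cm_id_pow[OF cmp n2 phi] by blast
  have Did: "\<And>a r. a<n \<Longrightarrow> r<n \<Longrightarrow> d a 0 r = (if a = r then 1 else 0)"
    using cm_id_pow[OF cmd n2 psi] by blast
  have d111: "d 1 1 1 = c"
  proof -
    have "(\<Sum>s\<le>1. \<Sum>m<n. \<Sum>r<n. p 1 s m * d 1 (1 - s) r * p m r 1) = d 1 1 1 * c + c * c"
    proof (rule sum3_ex2[where si=0 and mi=1 and ri=1 and sj=1 and mj=1 and rj=1])
      fix s m r :: nat assume h: "s \<in> {..1}" "m \<in> {..<n}" "r \<in> {..<n}" "(s,m,r) \<noteq> (0,1,1)" "(s,m,r) \<noteq> (1,1,1)"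
      show "p 1 s m * d 1 (1 - s) r * p m r 1 = 0"
      proof (cases "m = 1")
        case False thus ?thesis using h p1z[of s m] n1 by auto
      next
        case True
        hence "r \<noteq> 1" using h by auto
        thus ?thesis using h d1z[of "1-s" r] n1 by auto
      qed
    qed (use n1 al1 de1 c_def in auto)
    moreover have "(\<Sum>s\<le>1. \<Sum>m<n. \<Sum>r<n. p 1 (1 - s) m * p 1 s r * p m r 1) = c * c + c * c"
    proof (rule sum3_ex2[where si=0 and mi=1 and ri=1 and sj=1 and mj=1 and rj=1])
      fix s m r :: nat assume h: "s \<in> {..1}" "m \<in> {..<n}" "r \<in> {..<n}" "(s,m,r) \<noteq> (0,1,1)" "(s,m,r) \<noteq> (1,1,1)"
      show "p 1 (1 - s) m * p 1 s r * p m r 1 = 0"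
      proof (cases "m = 1")
        case False thus ?thesis using h p1z[of "1-s" m] n1 by auto
      next
        case True
        hence "r \<noteq> 1" using h by auto
        thus ?thesis using h p1z[of s r] n1 by auto
      qed
    qed (use n1 al1 c_def in auto)
    ultimately have "d 1 1 1 * c + c * c = c * c + c * c"
      using C1[of 1 1 1 1] n1 by simp
    thus ?thesis using c0 by simp
  qed
  have p011: "p 0 1 1 = 0" using p0z[of 1 1] n1 by simp
  have d011: "d 0 1 1 = 0" using d0z[of 1 1] n1 by simp
  have Prec: "\<And>m b. 2 \<le> m \<Longrightarrow> m < n \<Longrightarrow> b < n \<Longrightarrow>
    p b 1 m = (if 1 \<le> b then p (b-1) 1 (m-1) else 0) + (if m-1 \<le> b then p (b-(m-1)) 1 1 else 0)"
    using cm_ylin[OF cmp n2 Pid p011] by blast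
  have Drec: "\<And>m b. 2 \<le> m \<Longrightarrow> m < n \<Longrightarrow> b < n \<Longrightarrow>
    d b 1 m = (if 1 \<le> b then d (b-1) 1 (m-1) else 0) + (if m-1 \<le> b then d (b-(m-1)) 1 1 else 0)"
    using cm_ylin[OF cmd n2 Did d011] by blast
  have pbb: "p b 1 b = of_nat b * c" if "1 \<le> b" "b < n" for b
    using that
  proof (induction b)
    case 0 thus ?case by simp
  next
    case (Suc b)
    show ?case
    proof (cases "b = 0")
      case True thus ?thesis using c_def by simp
    next
      case False
      have "p (Suc b) 1 (Suc b) = p b 1 b + p 1 1 1"
        using Prec[of "Suc b" "Suc b"] Suc.prems False by simp
      also have "... = of_nat b * c + c" using Suc False c_def by simp
      finally show ?thesis by (simp add: algebra_simps)
    qed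
  qed
  have main: "\<forall>k<n. d b 1 k = p b 1 k" if "b < n" for b
    using that
  proof (induction b rule: less_induct)
    case (less b)
    have HP: "d b 1 m = p b 1 m" if m: "2 \<le> m" "m < n" for m
    proof -
      have e1: "(if 1 \<le> b then d (b-1) 1 (m-1) else 0) = (if 1 \<le> b then p (b-1) 1 (m-1) else 0)"
        using less.IH[of "b-1"] less.prems m by auto
      have e2: "(if m-1 \<le> b then d (b-(m-1)) 1 1 else 0) = (if m-1 \<le> b then p (b-(m-1)) 1 1 else 0)"
        using less.IH[of "b-(m-1)"] less.prems m n1 by auto
      show ?thesis using Drec[OF m less.prems] Prec[OF m less.prems] e1 e2 by simp
    qed
    have H1: "d b 1 1 = p b 1 1"
    proof (cases "b \<le> 1")
      case True thus ?thesis using p011 d011 d111 c_def by (cases b) auto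
    next
      case False
      hence b2: "2 \<le> b" by simp
      have bn: "b < n" using less.prems .
      have L0: "(\<Sum>m<n. \<Sum>r<n. p b 0 m * p 1 1 r * d m r 1) = c * d b 1 1"
      proof (rule sum2_ex1[where mi=b and ri=1])
        fix m r assume h: "m \<in> {..<n}" "r \<in> {..<n}" "(m,r) \<noteq> (b,1)"
        show "p b 0 m * p 1 1 r * d m r 1 = 0"
        proof (cases "m = b")
          case True thus ?thesis using h p1z[of 1 r] n1 by auto
        next
          case False thus ?thesis using h Pid[of b m] bn by auto
        qed
      qed (use bn n1 Pid c_def in auto)
      have L1: "(\<Sum>m<n. \<Sum>r<n. p b 1 m * p 1 0 r * d m r 1) = (\<Sum>m<n. p b 1 m * d m 1 1)"
      proof (rule sum.cong[OF refl], rule sum_ex1[where x=1])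
        fix m r assume "m \<in> {..<n}" "r \<in> {..<n}" "r \<noteq> 1"
        thus "p b 1 m * p 1 0 r * d m r 1 = 0" using p1z[of 0 r] n1 by auto
      qed (use n1 al1 in auto)
      have R0: "(\<Sum>m<n. \<Sum>r<n. d b 1 m * d 1 0 r * p m r 1) = (\<Sum>m<n. d b 1 m * p m 1 1)"
      proof (rule sum.cong[OF refl], rule sum_ex1[where x=1])
        fix m r assume "m \<in> {..<n}" "r \<in> {..<n}" "r \<noteq> 1"
        thus "d b 1 m * d 1 0 r * p m r 1 = 0" using d1z[of 0 r] n1 by auto
      qed (use n1 de1 in auto)
      have R1: "(\<Sum>m<n. \<Sum>r<n. d b 0 m * d 1 1 r * p m r 1) = c * p b 1 1"
      proof (rule sum2_ex1[where mi=b and ri=1])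
        fix m r assume h: "m \<in> {..<n}" "r \<in> {..<n}" "(m,r) \<noteq> (b,1)"
        show "d b 0 m * d 1 1 r * p m r 1 = 0"
        proof (cases "m = b")
          case True thus ?thesis using h d1z[of 1 r] n1 by auto
        next
          case False thus ?thesis using h Did[of b m] bn by auto
        qed
      qed (use bn n1 Did d111 in auto)
      have "(\<Sum>s\<le>1. \<Sum>m<n. \<Sum>r<n. p b s m * p 1 (1 - s) r * d m r 1) =
            (\<Sum>s\<le>1. \<Sum>m<n. \<Sum>r<n. d b (1 - s) m * d 1 s r * p m r 1)"
        using C2[of b 1 1 1] bn n1 by simp
      hence eq: "c * d b 1 1 + (\<Sum>m<n. p b 1 m * d m 1 1) = (\<Sum>m<n. d b 1 m * p m 1 1) + c * p b 1 1"
        unfolding sum_atMost_1 using L0 L1 R0 R1 by simp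
      have "(\<Sum>m<n. p b 1 m * d m 1 1 - d b 1 m * p m 1 1)
          = (p b 1 1 * d 1 1 1 - d b 1 1 * p 1 1 1) + (p b 1 b * d b 1 1 - d b 1 b * p b 1 1)"
      proof (rule sum_except2)
        fix m assume h: "m \<in> {..<n}" "m \<noteq> 1" "m \<noteq> b"
        show "p b 1 m * d m 1 1 - d b 1 m * p m 1 1 = 0"
        proof (cases "m = 0")
          case True thus ?thesis using P0[of b 1] D0[of b 1] bn n1 by simp
        next
          case False
          hence m2: "2 \<le> m" using h by simp
          have hp: "d b 1 m = p b 1 m" using HP[OF m2] h by simp
          show ?thesis
          proof (cases "m < b")
            case True thus ?thesis using hp less.IH[of m] h n1 by auto
          next
            case False
            hence "p b 1 m = 0" using Px[of b 1 m] h bn n1 by simp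
            thus ?thesis using hp by simp
          qed
        qed
      qed (use bn n1 b2 in auto)
      also have "... = (c * p b 1 1 - c * d b 1 1) + p b 1 b * (d b 1 1 - p b 1 1)"
        using d111 HP[OF b2 bn] c_def by (simp add: algebra_simps)
      finally have "(\<Sum>m<n. p b 1 m * d m 1 1) - (\<Sum>m<n. d b 1 m * p m 1 1)
          = (c * p b 1 1 - c * d b 1 1) + p b 1 b * (d b 1 1 - p b 1 1)"
        by (simp add: sum_subtractf)
      moreover have "(\<Sum>m<n. p b 1 m * d m 1 1) - (\<Sum>m<n. d b 1 m * p m 1 1) = c * p b 1 1 - c * d b 1 1"
        using eq by (simp add: algebra_simps)
      ultimately have "p b 1 b * (d b 1 1 - p b 1 1) = 0" by simp
      moreover have "p b 1 b \<noteq> 0" using pbb[of b] b2 bn c0 by simp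
      ultimately show ?thesis by simp
    qed
    show ?case
    proof (intro allI impI)
      fix k assume k: "k < n"
      show "d b 1 k = p b 1 k"
      proof (cases "k \<le> 1")
        case True thus ?thesis using H1 P0[of b 1] D0[of b 1] less.prems n1 by (cases k) auto
      next
        case False thus ?thesis using HP k by simp
      qed
    qed
  qed
  show ?thesis using main by blast
qed

end
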